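(* Let $G$ be a proper interval graph and $<$ a proper vertex ordering of it. Let $M=\{e_1,e_2,\ldots,e_t\}$ be a matching in $G$ where $l(e_1)<l(e_2)<\cdots<l(e_t)$. Then $M$ is uniquely restricted in $G$ if and only if $\{e_i,e_{i+1}\}$ is a uniquely restricted matching in $G$ for each $i\in\{1,2,\ldots,t-1\}$.
   Context: Graphs are finite, simple, undirected. A proper interval graph is a graph with an interval representation (closed real intervals, adjacency iff intersection for distinct vertices) in which no interval strictly contains another. An ordering $<$ of $V(G)$ is a proper vertex ordering if for all $u<v<w$, $uw\in E(G)$ implies $uv,vw\in E(G)$. For an edge $e=uv$, $l(e)=\min_<\{u,v\}$ and $r(e)=\max_<\{u,v\}$. A matching is a set of pairwise vertex-disjoint edges; it is uniquely restricted if no other matching of $G$ matches exactly the same vertex set. *)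

theory Defs
  imports Complex_Main
begin

definition graph :: "'a set \<Rightarrow> 'a set set \<Rightarrow> bool" where
  "graph V E \<longleftrightarrow> finite V \<and> (\<forall>e\<in>E. \<exists>u v. u \<noteq> v \<and> u \<in> V \<and> v \<in> V \<and> e = {u, v})"

definition ivl :: "('a \<Rightarrow> real \<times> real) \<Rightarrow> 'a \<Rightarrow> real set" where
  "ivl I v = {fst (I v) .. snd (I v)}"

definition proper_interval_graph :: "'a set \<Rightarrow> 'a set set \<Rightarrow> bool" where
  "proper_interval_graph V E \<longleftrightarrow> graph V E \<and>
     (\<exists>I :: 'a \<Rightarrow> real \<times> real.
        (\<forall>v\<in>V. fst (I v) \<le> snd (I v)) \<and>
        (\<forall>u\<in>V. \<forall>v\<in>V. u \<noteq> v \<longrightarrow> ({u, v} \<in> E \<longleftrightarrow> ivl I u \<inter> ivl I v \<noteq> {})) \<and>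
        (\<forall>u\<in>V. \<forall>v\<in>V. \<not> (ivl I u \<subset> ivl I v)))"

definition strict_linear_order_on :: "'a set \<Rightarrow> ('a \<Rightarrow> 'a \<Rightarrow> bool) \<Rightarrow> bool" where
  "strict_linear_order_on V lt \<longleftrightarrow>
     (\<forall>u\<in>V. \<not> lt u u) \<and>
     (\<forall>u\<in>V. \<forall>v\<in>V. \<forall>w\<in>V. lt u v \<longrightarrow> lt v w \<longrightarrow> lt u w) \<and>
     (\<forall>u\<in>V. \<forall>v\<in>V. u \<noteq> v \<longrightarrow> lt u v \<or> lt v u)"

definition proper_vertex_ordering :: "'a set \<Rightarrow> 'a set set \<Rightarrow> ('a \<Rightarrow> 'a \<Rightarrow> bool) \<Rightarrow> bool" where
  "proper_vertex_ordering V E lt \<longleftrightarrow> strict_linear_order_on V lt \<and>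
     (\<forall>u\<in>V. \<forall>v\<in>V. \<forall>w\<in>V. lt u v \<longrightarrow> lt v w \<longrightarrow> {u, w} \<in> E \<longrightarrow> {u, v} \<in> E \<and> {v, w} \<in> E)"

definition lft :: "('a \<Rightarrow> 'a \<Rightarrow> bool) \<Rightarrow> 'a set \<Rightarrow> 'a" where
  "lft lt e = (THE u. u \<in> e \<and> (\<forall>v\<in>e. v \<noteq> u \<longrightarrow> lt u v))"

definition matching :: "'a set set \<Rightarrow> 'a set set \<Rightarrow> bool" where
  "matching E M \<longleftrightarrow> M \<subseteq> E \<and> (\<forall>e\<in>M. \<forall>f\<in>M. e \<noteq> f \<longrightarrow> e \<inter> f = {})"

definition uniquely_restricted :: "'a set set \<Rightarrow> 'a set set \<Rightarrow> bool" where
  "uniquely_restricted E M \<longleftrightarrow> matching E M \<and>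
     (\<forall>M'. matching E M' \<and> \<Union>M' = \<Union>M \<longrightarrow> M' = M)"

end

theory Submission
  imports Defs
begin

lemma lft_eq:
  assumes "strict_linear_order_on V lt" "u\<in>V" "v\<in>V" "lt u v"
  shows "lft lt {u,v} = u"
  unfolding lft_def
proof (rule the_equality)
  show "u \<in> {u, v} \<and> (\<forall>w\<in>{u, v}. w \<noteq> u \<longrightarrow> lt u w)" using assms by auto
next
  fix x assume "x \<in> {u, v} \<and> (\<forall>w\<in>{u, v}. w \<noteq> x \<longrightarrow> lt x w)"
  then have x: "x = u \<or> x = v" and h: "x \<noteq> u \<Longrightarrow> lt x u" by auto
  have irr: "\<And>y. y\<in>V \<Longrightarrow> \<not> lt y y" and tr: "\<And>p q r. p\<in>V \<Longrightarrow> q\<in>V \<Longrightarrow> r\<in>V \<Longrightarrow> lt p q \<Longrightarrow> lt q r \<Longrightarrow> lt p r"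
    using assms(1) unfolding strict_linear_order_on_def by blast+
  show "x = u"
  proof (rule ccontr)
    assume "x \<noteq> u"
    then have "x = v" "lt v u" using x h by auto
    then have "lt u u" using tr[of u v u] assms by blast
    then show False using irr assms by blast
  qed
qed

lemma sub_UR:
  assumes "uniquely_restricted E M" "N \<subseteq> M" "{} \<notin> E"
  shows "uniquely_restricted E N"
proof -
  have mM: "matching E M" and uM: "\<And>M'. matching E M' \<Longrightarrow> \<Union>M' = \<Union>M \<Longrightarrow> M' = M"
    using assms(1) unfolding uniquely_restricted_def by blast+
  have ME: "M \<subseteq> E" and dM: "\<And>f g. f\<in>M \<Longrightarrow> g\<in>M \<Longrightarrow> f\<noteq>g \<Longrightarrow> f\<inter>g={}"
    using mM unfolding matching_def by blast+
  have mN: "matching E N" using mM assms(2) unfolding matching_def by blast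
  have "N' = N" if mN': "matching E N'" and uN': "\<Union>N' = \<Union>N" for N'
  proof -
    have N'E: "N' \<subseteq> E" and dN': "\<And>f g. f\<in>N' \<Longrightarrow> g\<in>N' \<Longrightarrow> f\<noteq>g \<Longrightarrow> f\<inter>g={}"
      using mN' unfolding matching_def by blast+
    have disjMN: "g \<inter> \<Union>N = {}" if "g \<in> M - N" for g
      using dM that assms(2) by blast
    define K where "K = N' \<union> (M - N)"
    have "matching E K"
      unfolding matching_def K_def
    proof (intro conjI ballI impI)
      show "N' \<union> (M - N) \<subseteq> E" using N'E ME by blast
    next
      fix f g assume f: "f \<in> N' \<union> (M - N)" and g: "g \<in> N' \<union> (M - N)" and "f \<noteq> g"
      show "f \<inter> g = {}"
      proof (cases "f \<in> N'")
        case True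
        then have "f \<subseteq> \<Union>N" using uN' by blast
        then show ?thesis using g dN'[OF True, of g] \<open>f\<noteq>g\<close> disjMN[of g] by blast
      next
        case False
        then have fM: "f \<in> M - N" using f by blast
        show ?thesis
        proof (cases "g \<in> N'")
          case True
          then have "g \<subseteq> \<Union>N" using uN' by blast
          then show ?thesis using disjMN[OF fM] by blast
        next
          case False
          then show ?thesis using g fM dM \<open>f\<noteq>g\<close> by blast
        qed
      qed
    qed
    moreover have "\<Union>K = \<Union>M" unfolding K_def using uN' assms(2) by blast
    ultimately have KM: "K = M" using uM by blast
    show "N' = N"
    proof
      show "N' \<subseteq> N"
      proof
        fix f assume fN': "f \<in> N'"
        then have fM: "f \<in> M" using KM K_def by blast
        show "f \<in> N"
        proof (rule ccontr)
          assume "f \<notin> N"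
          then have "f \<inter> \<Union>N = {}" using disjMN fM by blast
          moreover have "f \<subseteq> \<Union>N" using fN' uN' by blast
          ultimately have "f = {}" by blast
          then show False using fN' N'E assms(3) by blast
        qed
      qed
    next
      show "N \<subseteq> N'"
      proof
        fix g assume g: "g \<in> N"
        then have "g \<in> K" using KM assms(2) by blast
        then show "g \<in> N'" using g unfolding K_def by blast
      qed
    qed
  qed
  then have "\<forall>N'. matching E N' \<and> \<Union>N' = \<Union>N \<longrightarrow> N' = N" by blast
  then show ?thesis using mN unfolding uniquely_restricted_def by (intro conjI)
qed

lemma alt:
  assumes "{x,z}\<in>E" "{y,w}\<in>E" "x\<noteq>y" "x\<noteq>z" "x\<noteq>w" "y\<noteq>z" "y\<noteq>w" "z\<noteq>w"
  shows "\<not> uniquely_restricted E {{x,y},{z,w}}"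
proof
  assume U: "uniquely_restricted E {{x,y},{z,w}}"
  have d: "{x,z} \<inter> {y,w} = {}" using assms by simp
  have ne: "{x,z} \<noteq> {y,w}" using assms by (simp add: doubleton_eq_iff)
  have m: "matching E {{x,z},{y,w}}" unfolding matching_def
  proof (intro conjI ballI impI)
    show "{{x,z},{y,w}} \<subseteq> E" using assms(1,2) by simp
  next
    fix e f assume "e \<in> {{x,z},{y,w}}" "f \<in> {{x,z},{y,w}}" "e \<noteq> f"
    then show "e \<inter> f = {}" using d by (auto simp: Int_commute)
  qed
  have u: "\<Union>{{x,z},{y,w}} = \<Union>{{x,y},{z,w}}" by auto
  have all: "\<forall>M'. matching E M' \<and> \<Union>M' = \<Union>{{x,y},{z,w}} \<longrightarrow> M' = {{x,y},{z,w}}"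
    using U unfolding uniquely_restricted_def by (rule conjunct2)
  have eq: "{{x,z},{y,w}} = {{x,y},{z,w}}" using all[rule_format, OF conjI[OF m u]] .
  have "{x,z} \<in> {{x,z},{y,w}}" by simp
  then have "{x,z} \<in> {{x,y},{z,w}}" unfolding eq .
  then have "{x,z} = {x,y} \<or> {x,z} = {z,w}" by simp
  then show False using assms(3-8) by (auto simp: doubleton_eq_iff)
qed

lemma edge_other:
  assumes "graph V E" "f \<in> E" "x \<in> f"
  shows "\<exists>w. f = {x, w} \<and> w \<noteq> x"
proof -
  obtain u v where uv: "u \<noteq> v" "f = {u,v}" using assms(1,2) unfolding graph_def by blast
  show ?thesis
  proof (cases "x = u")
    case True then show ?thesis using uv by blast
  next
    case False
    then have "x = v" using uv assms(3) by blast
    then have "f = {x, u}" using uv by (simp add: insert_commute)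
    then show ?thesis using uv \<open>x = v\<close> by blast
  qed
qed

theorem theorem3:
  fixes V :: "'a set" and E :: "'a set set" and lt :: "'a \<Rightarrow> 'a \<Rightarrow> bool"
    and M :: "'a set set" and e :: "nat \<Rightarrow> 'a set" and t :: nat
  assumes "proper_interval_graph V E"
    and "proper_vertex_ordering V E lt"
    and "matching E M"
    and "M = e ` {1..t}"
    and "\<And>i. 1 \<le> i \<Longrightarrow> i < t \<Longrightarrow> lt (lft lt (e i)) (lft lt (e (Suc i)))"
  shows "uniquely_restricted E M \<longleftrightarrow>
           (\<forall>i\<in>{1..<t}. uniquely_restricted E {e i, e (Suc i)})"
proof -
  have G: "graph V E" using assms(1) unfolding proper_interval_graph_def by blast
  have SL: "strict_linear_order_on V lt" using assms(2) unfolding proper_vertex_ordering_def by blast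
  have P: "\<And>u v w. u\<in>V \<Longrightarrow> v\<in>V \<Longrightarrow> w\<in>V \<Longrightarrow> lt u v \<Longrightarrow> lt v w \<Longrightarrow> {u,w}\<in>E \<Longrightarrow> {u,v}\<in>E \<and> {v,w}\<in>E"
    using assms(2) unfolding proper_vertex_ordering_def by blast
  have irr: "\<And>u. u\<in>V \<Longrightarrow> \<not> lt u u"
    and tr: "\<And>u v w. u\<in>V \<Longrightarrow> v\<in>V \<Longrightarrow> w\<in>V \<Longrightarrow> lt u v \<Longrightarrow> lt v w \<Longrightarrow> lt u w"
    and tot: "\<And>u v. u\<in>V \<Longrightarrow> v\<in>V \<Longrightarrow> u\<noteq>v \<Longrightarrow> lt u v \<or> lt v u"
    using SL unfolding strict_linear_order_on_def by blast+
  have nE: "{} \<notin> E" using G unfolding graph_def by blast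
  have ME: "M \<subseteq> E" and Mdisj: "\<And>f g. f\<in>M \<Longrightarrow> g\<in>M \<Longrightarrow> f\<noteq>g \<Longrightarrow> f\<inter>g={}"
    using assms(3) unfolding matching_def by blast+
  have edge: "\<exists>u v. f={u,v} \<and> u\<in>V \<and> v\<in>V \<and> lt u v \<and> lft lt f = u" if "f\<in>E" for f
  proof -
    obtain u v where uv: "u\<noteq>v" "u\<in>V" "v\<in>V" "f={u,v}" using G \<open>f\<in>E\<close> unfolding graph_def by blast
    show ?thesis
    proof (cases "lt u v")
      case True
      then show ?thesis using uv lft_eq[OF SL] by blast
    next
      case False
      then have "lt v u" using tot uv by blast
      then show ?thesis using uv lft_eq[OF SL, of v u] by (metis insert_commute)
    qed
  qed
  have ex: "\<forall>i\<in>{1..t}. \<exists>p. e i = {fst p, snd p} \<and> fst p\<in>V \<and> snd p\<in>V \<and> lt (fst p) (snd p) \<and> lft lt (e i) = fst p"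
  proof
    fix i assume "i \<in> {1..t}"
    then have "e i \<in> E" using ME assms(4) by blast
    then obtain u v where "e i = {u,v} \<and> u\<in>V \<and> v\<in>V \<and> lt u v \<and> lft lt (e i) = u" using edge by blast
    then show "\<exists>p. e i = {fst p, snd p} \<and> fst p\<in>V \<and> snd p\<in>V \<and> lt (fst p) (snd p) \<and> lft lt (e i) = fst p"
      by (intro exI[of _ "(u,v)"]) auto
  qed
  obtain g where g: "\<forall>i\<in>{1..t}. e i = {fst (g i), snd (g i)} \<and> fst (g i)\<in>V \<and> snd (g i)\<in>V \<and> lt (fst (g i)) (snd (g i)) \<and> lft lt (e i) = fst (g i)"
    by (rule exE[OF bchoice[OF ex]]) blast
  define a where "a i = fst (g i)" for i
  define b where "b i = snd (g i)" for i
  have ab: "\<And>i. i\<in>{1..t} \<Longrightarrow> e i = {a i, b i} \<and> a i \<in> V \<and> b i \<in> V \<and> lt (a i) (b i) \<and> lft lt (e i) = a i"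
    using g unfolding a_def b_def by blast
  have eM: "\<And>i. i\<in>{1..t} \<Longrightarrow> e i \<in> M" using assms(4) by blast
  have mono: "\<forall>j. i<j \<longrightarrow> j\<le>t \<longrightarrow> 1\<le>i \<longrightarrow> lt (a i) (a j)" for i
  proof
    fix j show "i<j \<longrightarrow> j\<le>t \<longrightarrow> 1\<le>i \<longrightarrow> lt (a i) (a j)"
    proof (induction j)
      case 0
      then show ?case by simp
    next
      case (Suc j)
      show ?case
      proof (intro impI)
        assume h: "i < Suc j" "Suc j \<le> t" "1 \<le> i"
        have s: "lt (a j) (a (Suc j))" if "1 \<le> j" using assms(5)[of j] that h ab[of j] ab[of "Suc j"] by auto
        show "lt (a i) (a (Suc j))"
        proof (cases "i = j")
          case True then show ?thesis using s h by simp
        next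
          case False
          then have "lt (a i) (a j)" using Suc h by simp
          then show ?thesis using s h False tr ab[of i] ab[of j] ab[of "Suc j"] by auto
        qed
      qed
    qed
  qed
  have monoi: "\<And>i j. 1\<le>i \<Longrightarrow> i<j \<Longrightarrow> j\<le>t \<Longrightarrow> lt (a i) (a j)" using mono by blast
  have dis: "\<And>i j. i\<in>{1..t} \<Longrightarrow> j\<in>{1..t} \<Longrightarrow> i\<noteq>j \<Longrightarrow> e i \<inter> e j = {}"
  proof -
    fix i j assume h: "i\<in>{1..t}" "j\<in>{1..t}" "i\<noteq>j"
    have "e i \<noteq> e j"
    proof
      assume "e i = e j"
      then have "a i = a j" using ab[OF h(1)] ab[OF h(2)] by metis
      moreover have "lt (a i) (a j) \<or> lt (a j) (a i)" using h monoi by (metis atLeastAtMost_iff nat_neq_iff)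
      ultimately show False using irr ab[OF h(1)] by metis
    qed
    then show "e i \<inter> e j = {}" using Mdisj eM h by blast
  qed
  show ?thesis
  proof
    assume U: "uniquely_restricted E M"
    show "\<forall>i\<in>{1..<t}. uniquely_restricted E {e i, e (Suc i)}"
    proof
      fix i assume "i \<in> {1..<t}"
      then have "{e i, e (Suc i)} \<subseteq> M" using eM by auto
      then show "uniquely_restricted E {e i, e (Suc i)}" using sub_UR[OF U _ nE] by blast
    qed
  next
    assume H: "\<forall>i\<in>{1..<t}. uniquely_restricted E {e i, e (Suc i)}"
    have pair: "lt (b i) (a (Suc i)) \<and> \<not> ({a i, a (Suc i)} \<in> E \<and> {b i, b (Suc i)} \<in> E)"
      if i: "i \<in> {1..<t}" for i
    proof -
      have i1: "i \<in> {1..t}" and i2: "Suc i \<in> {1..t}" using i by auto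
      note A = ab[OF i1] and B = ab[OF i2]
      have d: "e i \<inter> e (Suc i) = {}" using dis i1 i2 by simp
      have UR: "uniquely_restricted E {{a i, b i}, {a (Suc i), b (Suc i)}}" using H i A B by metis
      have ne: "a i \<noteq> b i" "a i \<noteq> a (Suc i)" "a i \<noteq> b (Suc i)" "b i \<noteq> a (Suc i)"
        "b i \<noteq> b (Suc i)" "a (Suc i) \<noteq> b (Suc i)"
        using d A B irr by auto
      have "e i \<in> E" "e (Suc i) \<in> E" using ME eM[OF i1] eM[OF i2] by blast+
      then have eiE: "{a i, b i} \<in> E" and eSE: "{a (Suc i), b (Suc i)} \<in> E" using A B by simp_all
      have aa: "lt (a i) (a (Suc i))" using monoi i by auto
      have 1: "lt (b i) (a (Suc i))"
      proof (rule ccontr)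
        assume "\<not> lt (b i) (a (Suc i))"
        then have lt1: "lt (a (Suc i)) (b i)" using tot ne A B by blast
        have e1: "{a i, a (Suc i)} \<in> E" "{a (Suc i), b i} \<in> E"
          using P[of "a i" "a (Suc i)" "b i"] A B aa lt1 eiE by auto
        show False
        proof (cases "lt (b i) (b (Suc i))")
          case True
          have "{b i, b (Suc i)} \<in> E" using P[of "a (Suc i)" "b i" "b (Suc i)"] A B lt1 True eSE by auto
          then show False using alt[of "a i" "a (Suc i)" E "b i" "b (Suc i)"] e1 ne UR by auto
        next
          case False
          then have lt2: "lt (b (Suc i)) (b i)" using tot ne A B by blast
          have "lt (a i) (b (Suc i))" using tr A B aa by blast
          then have "{a i, b (Suc i)} \<in> E" using P[of "a i" "b (Suc i)" "b i"] A B lt2 eiE by auto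
          moreover have "{b i, a (Suc i)} \<in> E" using e1 by (simp add: insert_commute)
          moreover have "{{a i, b i}, {b (Suc i), a (Suc i)}} = {{a i, b i}, {a (Suc i), b (Suc i)}}"
            by (simp add: insert_commute)
          ultimately show False using alt[of "a i" "b (Suc i)" E "b i" "a (Suc i)"] ne UR by auto
        qed
      qed
      have 2: "\<not> ({a i, a (Suc i)} \<in> E \<and> {b i, b (Suc i)} \<in> E)"
        using alt[of "a i" "a (Suc i)" E "b i" "b (Suc i)"] ne UR by auto
      show ?thesis using 1 2 by blast
    qed
    have bltA: "lt (b i) (a j)" if "1 \<le> i" "i < j" "j \<le> t" for i j
    proof (cases "j = Suc i")
      case True then show ?thesis using pair that by auto
    next
      case False
      then have "lt (a (Suc i)) (a j)" using monoi that by auto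
      moreover have "lt (b i) (a (Suc i))" using pair that by auto
      moreover have "i \<in> {1..t}" "Suc i \<in> {1..t}" "j \<in> {1..t}" using that by auto
      ultimately show ?thesis using tr[of "b i" "a (Suc i)" "a j"] ab by blast
    qed
    have mM: "matching E M" by fact
    have "M' = M" if mM': "matching E M'" and uM': "\<Union>M' = \<Union>M" for M'
    proof (rule ccontr)
      assume neq: "M' \<noteq> M"
      have M'E: "M' \<subseteq> E" and dM': "\<And>f g. f\<in>M' \<Longrightarrow> g\<in>M' \<Longrightarrow> f\<noteq>g \<Longrightarrow> f\<inter>g={}"
        using mM' unfolding matching_def by blast+
      have exi: "\<exists>i. i\<in>{1..t} \<and> e i \<notin> M'"
      proof (rule ccontr)
        assume "\<not> (\<exists>i. i\<in>{1..t} \<and> e i \<notin> M')"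
        then have sub: "M \<subseteq> M'" using assms(4) by blast
        have "M' \<subseteq> M"
        proof
          fix f assume fM': "f \<in> M'"
          then obtain x where "x \<in> f" using M'E nE by (metis all_not_in_conv subsetD)
          then obtain g where "g \<in> M" "x \<in> g" using uM' fM' by blast
          then have "f = g" using dM'[OF fM', of g] sub \<open>x\<in>f\<close> by blast
          then show "f \<in> M" using \<open>g\<in>M\<close> by simp
        qed
        then show False using subset_antisym[OF _ sub] neq by simp
      qed
      define i where "i = (LEAST i. i\<in>{1..t} \<and> e i \<notin> M')"
      have iP: "i\<in>{1..t} \<and> e i \<notin> M'" unfolding i_def using exi by (rule LeastI_ex)
      have before: "\<And>j. j < i \<Longrightarrow> j \<in> {1..t} \<Longrightarrow> e j \<in> M'"
        unfolding i_def using not_less_Least[of _ "\<lambda>i. i\<in>{1..t} \<and> e i \<notin> M'"] by blast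
      note A = ab[of i]
      have i1: "i \<in> {1..t}" using iP by blast
      have eiM': "e i \<notin> M'" using iP by blast
      have later: "\<exists>k. k\<in>{1..t} \<and> i < k \<and> w \<in> e k" if "w \<in> f" "f \<in> M'" "w \<notin> e i" "f \<inter> e i \<noteq> {}" for w f
      proof -
        have "w \<in> \<Union>M" using that uM' by blast
        then obtain k where k: "k \<in> {1..t}" "w \<in> e k" using assms(4) by blast
        have "k \<noteq> i" using k that by blast
        moreover have "\<not> k < i"
        proof
          assume "k < i"
          then have "e k \<in> M'" using before k by blast
          then have "f = e k" using dM'[OF that(2)] k that(1) by blast
          then show False using dis[OF i1 k(1)] \<open>k \<noteq> i\<close> that(4) by blast
        qed
        ultimately have "i < k" by linarith
        then show ?thesis using k by blast
      qed
      have ai: "a i \<in> \<Union>M'" using uM' A i1 eM by blast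
      then obtain f where f: "f \<in> M'" "a i \<in> f" by blast
      obtain w where w: "f = {a i, w}" "w \<noteq> a i"
        using edge_other[OF G, of f "a i"] f M'E by blast
      have wb: "w \<noteq> b i" using w f eiM' A i1 by auto
      then obtain k where k: "k\<in>{1..t}" "i < k" "w \<in> e k" using later[of w f] w f A i1 by auto
      have bi: "b i \<in> \<Union>M'" using uM' A i1 eM by blast
      then obtain f' where f': "f' \<in> M'" "b i \<in> f'" by blast
      obtain w' where w': "f' = {b i, w'}" "w' \<noteq> b i"
        using edge_other[OF G, of f' "b i"] f' M'E by blast
      have wa: "w' \<noteq> a i" using w' f' eiM' A i1 by (auto simp: insert_commute)
      then obtain k' where k': "k'\<in>{1..t}" "i < k'" "w' \<in> e k'" using later[of w' f'] w' f' A i1 by auto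
      have it: "i \<in> {1..<t}" using i1 k by auto
      have i2: "Suc i \<in> {1..t}" using it by auto
      note B = ab[OF i2]
      have Ai: "e i = {a i, b i}" "a i \<in> V" "b i \<in> V" "lt (a i) (b i)" using A i1 by auto
      have pr: "lt (b i) (a (Suc i))" "\<not> ({a i, a (Suc i)} \<in> E \<and> {b i, b (Suc i)} \<in> E)"
        using pair[OF it] by auto
      have aa: "lt (a i) (a (Suc i))" using monoi it by auto
      have bb: "lt (b i) (b (Suc i))" using tr pr(1) B Ai by blast
      have ab': "lt (a i) (b (Suc i))" using tr aa B Ai by blast
      have pos: "x = a (Suc i) \<or> x = b (Suc i) \<or> lt (b (Suc i)) x" if "x \<in> e k''" "k''\<in>{1..t}" "i < k''" for x k''
      proof (cases "k'' = Suc i")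
        case True then show ?thesis using that B by auto
      next
        case False
        then have kk: "Suc i < k''" using that by auto
        have "lt (b (Suc i)) (a k'')" using bltA[of "Suc i" k''] kk that by auto
        moreover have "x = a k'' \<or> x = b k''" using that ab[of k''] by auto
        ultimately show ?thesis using tr ab[of k''] B that by blast
      qed
      have xV: "x \<in> V" if "x \<in> e k''" "k''\<in>{1..t}" for x k''
        using that ab[of k''] by auto
      have fE: "{a i, w} \<in> E" using f w M'E by auto
      have f'E: "{b i, w'} \<in> E" using f' w' M'E by auto
      have wV: "w \<in> V" using xV k by blast
      have w'V: "w' \<in> V" using xV k' by blast
      have E1: "{a i, a (Suc i)} \<in> E"
      proof -
        have "w = a (Suc i) \<or> lt (a (Suc i)) w"
          using pos[OF k(3) k(1) k(2)] B tr wV by blast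
        then show ?thesis using fE P[of "a i" "a (Suc i)" w] aa Ai B wV by auto
      qed
      have E2: "{b i, b (Suc i)} \<in> E"
      proof -
        consider "w' = a (Suc i)" | "w' = b (Suc i)" | "lt (b (Suc i)) w'"
          using pos[OF k'(3) k'(1) k'(2)] by blast
        then show ?thesis
        proof cases
          case 1
          have "w \<noteq> a (Suc i)"
          proof
            assume "w = a (Suc i)"
            then have "f \<inter> f' \<noteq> {}" using w w' 1 by auto
            moreover have "f \<noteq> f'" using w w' Ai wa irr by (auto simp: doubleton_eq_iff)
            ultimately show False using dM' f f' by blast
          qed
          then have "w = b (Suc i) \<or> lt (b (Suc i)) w" using pos[OF k(3) k(1) k(2)] by blast
          then have "{a i, b (Suc i)} \<in> E" using fE P[of "a i" "b (Suc i)" w] ab' Ai B wV by auto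
          then show ?thesis using P[of "a i" "b i" "b (Suc i)"] Ai B bb by auto
        next
          case 2 then show ?thesis using f'E by simp
        next
          case 3 then show ?thesis using f'E P[of "b i" "b (Suc i)" w'] bb Ai B w'V by auto
        qed
      qed
      show False using E1 E2 pr(2) by blast
    qed
    then show "uniquely_restricted E M" using mM unfolding uniquely_restricted_def by blast
  qed
qed

end
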